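(* Let $\mathbf{L}$ be an integral implicative lattice with canonical frame $(X,\perp,Y,T)$. Then the map $a\mapsto X_a=\{x\in X: a\in x\}$ is an isomorphism of integral implicative lattices from $\mathbf L$ onto $\mathrm{KO}\mathcal{G}(X)$, the algebra of compact-open stable subsets of $X$ with operations $\cap$, the join of $\mathcal G(X)$, and $\Rightarrow$; in particular $X_a\Rightarrow X_b=X_{a\to b}$.
   Context: An integral implicative lattice is a bounded lattice with binary $\to$ satisfying (A1) $(a\vee b)\to c=(a\to c)\wedge(b\to c)$, (A2) $a\to(b\wedge c)=(a\to b)\wedge(a\to c)$, (A3) $a\le b$ iff $1\le a\to b$. The canonical frame of $\mathbf L$: $X$ is the set of filters of $\mathbf L$, $Y$ the set of ideals, $x\perp y$ iff $x\cap y\neq\emptyset$; for $x\in X,v\in Y$, $x\leadsto v$ is the ideal generated by $\{a\to b:a\in x,b\in v\}$, and $yTxv$ iff $x\leadsto v\subseteq y$. For $U\subseteq X$, $U'=\{y\in Y:\forall x\in U\ x\perp y\}$; for $V\subseteq Y$, ${}'V=\{x\in X:\forall y\in V\ x\perp y\}$; $A\subseteq X$ is stable if $A={}'(A')$, $B\subseteq Y$ co-stable if $B=({}'B)'$; $\mathcal G(X)$ is the complete lattice of stable sets (meet is intersection, join of $A,C$ is ${}'((A\cup C)')$). For $A\in\mathcal G(X)$ and co-stable $B$: $A\blacktriangleright B=(\{y:\exists x\in A\,\exists v\in B\ yTxv\})''$ and for $A,C\in\mathcal G(X)$: $A\Rightarrow C={}'(A\blacktriangleright C')$. $X$ carries the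 (spectral) topology generated by the basis $\{X_a:a\in L\}$; $\mathrm{KO}\mathcal G(X)$ is the set of stable sets that are compact and open in this topology. *)

theory Defs
  imports "HOL-Analysis.Analysis"
begin

definition integral_implicative_lattice :: "('a::bounded_lattice \<Rightarrow> 'a \<Rightarrow> 'a) \<Rightarrow> bool" where
  "integral_implicative_lattice imp \<longleftrightarrow>
     (\<forall>a b c. imp (sup a b) c = inf (imp a c) (imp b c)) \<and>
     (\<forall>a b c. imp a (inf b c) = inf (imp a b) (imp a c)) \<and>
     (\<forall>a b. a \<le> b \<longleftrightarrow> top \<le> imp a b)"

text \<open>Filters and ideals (nonempty; the improper ones are included).\<close>
definition is_filter :: "'a::bounded_lattice set \<Rightarrow> bool" where
  "is_filter F \<longleftrightarrow> F \<noteq> {} \<and> (\<forall>a\<in>F. \<forall>b. a \<le> b \<longrightarrow> b \<in> F) \<and> (\<forall>a\<in>F. \<forall>b\<in>F. inf a b \<in> F)"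

definition is_ideal :: "'a::bounded_lattice set \<Rightarrow> bool" where
  "is_ideal I \<longleftrightarrow> I \<noteq> {} \<and> (\<forall>a\<in>I. \<forall>b. b \<le> a \<longrightarrow> b \<in> I) \<and> (\<forall>a\<in>I. \<forall>b\<in>I. sup a b \<in> I)"

definition Xs :: "'a::bounded_lattice set set" where
  "Xs = {F. is_filter F}"

definition Ys :: "'a::bounded_lattice set set" where
  "Ys = {I. is_ideal I}"

definition perp :: "'a set \<Rightarrow> 'a set \<Rightarrow> bool" where
  "perp x y \<longleftrightarrow> x \<inter> y \<noteq> {}"

definition ideal_gen :: "'a::bounded_lattice set \<Rightarrow> 'a set" where
  "ideal_gen S = \<Inter>{I. is_ideal I \<and> S \<subseteq> I}"

definition leadsto :: "('a::bounded_lattice \<Rightarrow> 'a \<Rightarrow> 'a) \<Rightarrow> 'a set \<Rightarrow> 'a set \<Rightarrow> 'a set" where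
  "leadsto imp x v = ideal_gen {imp a b | a b. a \<in> x \<and> b \<in> v}"

definition Trel :: "('a::bounded_lattice \<Rightarrow> 'a \<Rightarrow> 'a) \<Rightarrow> 'a set \<Rightarrow> 'a set \<Rightarrow> 'a set \<Rightarrow> bool" where
  "Trel imp y x v \<longleftrightarrow> leadsto imp x v \<subseteq> y"

definition upol :: "'a::bounded_lattice set set \<Rightarrow> 'a set set" where
  "upol U = {y \<in> Ys. \<forall>x\<in>U. perp x y}"

definition lpol :: "'a::bounded_lattice set set \<Rightarrow> 'a set set" where
  "lpol V = {x \<in> Xs. \<forall>y\<in>V. perp x y}"

definition stable :: "'a::bounded_lattice set set \<Rightarrow> bool" where
  "stable A \<longleftrightarrow> A \<subseteq> Xs \<and> A = lpol (upol A)"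

definition Gjoin :: "'a::bounded_lattice set set \<Rightarrow> 'a set set \<Rightarrow> 'a set set" where
  "Gjoin A C = lpol (upol (A \<union> C))"

definition blacktri :: "('a::bounded_lattice \<Rightarrow> 'a \<Rightarrow> 'a) \<Rightarrow> 'a set set \<Rightarrow> 'a set set \<Rightarrow> 'a set set" where
  "blacktri imp A B = upol (lpol {y \<in> Ys. \<exists>x\<in>A. \<exists>v\<in>B. Trel imp y x v})"

definition Gimp :: "('a::bounded_lattice \<Rightarrow> 'a \<Rightarrow> 'a) \<Rightarrow> 'a set set \<Rightarrow> 'a set set \<Rightarrow> 'a set set" where
  "Gimp imp A C = lpol (blacktri imp A (upol C))"

definition Xa :: "'a::bounded_lattice \<Rightarrow> 'a set set" where
  "Xa a = {x \<in> Xs. a \<in> x}"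

definition spectral_top :: "'a::bounded_lattice set topology" where
  "spectral_top = subtopology (topology_generated_by (range Xa)) Xs"

definition KOG :: "'a::bounded_lattice set set set" where
  "KOG = {A. stable A \<and> compactin spectral_top A \<and> openin spectral_top A}"

end

theory Submission
  imports Defs
begin

lemma up_filter: "is_filter {b. (a::'a::bounded_lattice) \<le> b}"
  unfolding is_filter_def by auto

lemma down_ideal: "is_ideal {b. b \<le> (a::'a::bounded_lattice)}"
  unfolding is_ideal_def by auto

lemma filter_up: "is_filter F \<Longrightarrow> a \<in> F \<Longrightarrow> a \<le> b \<Longrightarrow> b \<in> F"
  unfolding is_filter_def by blast

lemma ideal_down: "is_ideal I \<Longrightarrow> a \<in> I \<Longrightarrow> b \<le> a \<Longrightarrow> b \<in> I"
  unfolding is_ideal_def by blast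

lemma ideal_sup: "is_ideal I \<Longrightarrow> a \<in> I \<Longrightarrow> b \<in> I \<Longrightarrow> sup a b \<in> I"
  unfolding is_ideal_def by blast

lemma ideal_bot: "is_ideal I \<Longrightarrow> bot \<in> I"
  unfolding is_ideal_def by (auto intro: bot_least)

lemma filter_top: "is_filter F \<Longrightarrow> top \<in> F"
  unfolding is_filter_def by (auto intro: top_greatest)

lemma upol_Xa: "upol (Xa (a::'a::bounded_lattice)) = {I \<in> Ys. a \<in> I}"
proof
  show "upol (Xa a) \<subseteq> {I \<in> Ys. a \<in> I}"
  proof
    fix I assume I: "I \<in> upol (Xa a)"
    then have "{b. a \<le> b} \<in> Xa a" using up_filter unfolding Xa_def Xs_def by auto
    with I obtain b where "b \<in> I" "a \<le> b" unfolding upol_def perp_def by blast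
    with I show "I \<in> {I \<in> Ys. a \<in> I}" unfolding upol_def Ys_def using ideal_down by blast
  qed
next
  show "{I \<in> Ys. a \<in> I} \<subseteq> upol (Xa a)"
    unfolding upol_def Xa_def perp_def by blast
qed

lemma lpol_Ia: "lpol {I \<in> Ys. (a::'a::bounded_lattice) \<in> I} = Xa a"
proof
  show "lpol {I \<in> Ys. a \<in> I} \<subseteq> Xa a"
  proof
    fix x assume x: "x \<in> lpol {I \<in> Ys. a \<in> I}"
    have d: "{b. b \<le> a} \<in> {I \<in> Ys. a \<in> I}" using down_ideal unfolding Ys_def by auto
    have "\<forall>y\<in>{I \<in> Ys. a \<in> I}. perp x y" using x by (simp add: lpol_def)
    then have "perp x {b. b \<le> a}" using d by (rule bspec)
    then obtain b where "b \<in> x" "b \<le> a" unfolding perp_def by auto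
    moreover have "is_filter x" "x \<in> Xs" using x unfolding lpol_def Xs_def by auto
    ultimately show "x \<in> Xa a" unfolding Xa_def using filter_up by blast
  qed
next
  show "Xa a \<subseteq> lpol {I \<in> Ys. a \<in> I}"
    unfolding lpol_def Xa_def perp_def by auto
qed

lemma stable_Xa: "stable (Xa a)"
  unfolding stable_def using upol_Xa lpol_Ia by (metis (no_types, lifting) Xa_def mem_Collect_eq subsetI)

lemma upol_Un: "upol (A \<union> B) = upol A \<inter> upol B"
  unfolding upol_def by auto

lemma upol_UN: "upol (\<Union> (f ` C)) = Ys \<inter> (\<Inter>c\<in>C. upol (f c))"
  unfolding upol_def by auto

lemma fin_sup_ex:
  assumes "finite (C::'a::bounded_lattice set)"
  shows "\<exists>s. \<forall>I\<in>(Ys::'a set set). (C \<subseteq> I \<longleftrightarrow> s \<in> I)"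
  using assms
proof induct
  case empty
  then show ?case using ideal_bot unfolding Ys_def by auto
next
  case (insert c C)
  then obtain s where s: "\<forall>I\<in>(Ys::'a set set). (C \<subseteq> I \<longleftrightarrow> s \<in> I)" by blast
  show ?case
  proof (intro exI ballI)
    fix I assume I: "I \<in> (Ys::'a set set)"
    then have ii: "is_ideal I" unfolding Ys_def by auto
    have sI: "C \<subseteq> I \<longleftrightarrow> s \<in> I" using s I by blast
    show "insert c C \<subseteq> I \<longleftrightarrow> sup c s \<in> I"
    proof
      assume "insert c C \<subseteq> I"
      then have "c \<in> I" "s \<in> I" using sI by auto
      then show "sup c s \<in> I" by (rule ideal_sup[OF ii])
    next
      assume h: "sup c s \<in> I"
      have "c \<in> I" by (rule ideal_down[OF ii h]) simp
      moreover have "s \<in> I" by (rule ideal_down[OF ii h]) simp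
      ultimately show "insert c C \<subseteq> I" using sI by auto
    qed
  qed
qed

lemma Xa_inf: "Xa (inf a b) = Xa a \<inter> Xa (b::'a::bounded_lattice)"
proof
  show "Xa (inf a b) \<subseteq> Xa a \<inter> Xa b"
  proof
    fix x assume "x \<in> Xa (inf a b)"
    then have f: "is_filter x" "x \<in> Xs" "inf a b \<in> x" unfolding Xa_def Xs_def by auto
    have "a \<in> x" by (rule filter_up[OF f(1) f(3)]) simp
    moreover have "b \<in> x" by (rule filter_up[OF f(1) f(3)]) simp
    ultimately show "x \<in> Xa a \<inter> Xa b" using f unfolding Xa_def by auto
  qed
next
  show "Xa a \<inter> Xa b \<subseteq> Xa (inf a b)"
  proof
    fix x assume "x \<in> Xa a \<inter> Xa b"
    then have f: "is_filter x" "x \<in> Xs" "a \<in> x" "b \<in> x" unfolding Xa_def Xs_def by auto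
    then have "\<forall>a\<in>x. \<forall>b\<in>x. inf a b \<in> x" unfolding is_filter_def by (elim conjE)
    then have "inf a b \<in> x" using f by blast
    then show "x \<in> Xa (inf a b)" using f unfolding Xa_def by auto
  qed
qed

lemma Xa_sup: "Xa (sup a b) = Gjoin (Xa a) (Xa (b::'a::bounded_lattice))"
proof -
  have "upol (Xa a \<union> Xa b) = {I \<in> Ys. sup a b \<in> I}"
  proof -
    have "a \<in> I \<and> b \<in> I \<longleftrightarrow> sup a b \<in> I" if I: "is_ideal I" for I
    proof
      assume "a \<in> I \<and> b \<in> I" then show "sup a b \<in> I" using ideal_sup[OF I] by blast
    next
      assume h: "sup a b \<in> I"
      have "a \<in> I" by (rule ideal_down[OF I h]) simp
      moreover have "b \<in> I" by (rule ideal_down[OF I h]) simp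
      ultimately show "a \<in> I \<and> b \<in> I" by blast
    qed
    then show ?thesis unfolding upol_Un upol_Xa Ys_def by auto
  qed
  then show ?thesis unfolding Gjoin_def using lpol_Ia by metis
qed

lemma Xa_top: "Xa top = Xs"
  unfolding Xa_def Xs_def using filter_top by auto

lemma Xa_bot: "Xa (bot::'a::bounded_lattice) = lpol Ys"
proof -
  have "Ys = {I \<in> Ys. (bot::'a) \<in> I}" unfolding Ys_def using ideal_bot by auto
  then show ?thesis using lpol_Ia by metis
qed

lemma Xa_inj: "inj (Xa :: 'a::bounded_lattice \<Rightarrow> _)"
proof (rule injI)
  fix a b :: 'a assume e: "Xa a = Xa b"
  have "{c. a \<le> c} \<in> Xa a" "{c. b \<le> c} \<in> Xa b" using up_filter unfolding Xa_def Xs_def by auto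
  then have "{c. a \<le> c} \<in> Xa b" "{c. b \<le> c} \<in> Xa a" using e by auto
  then have "b \<in> {c. a \<le> c}" "a \<in> {c. b \<le> c}" unfolding Xa_def by auto
  then show "a = b" by (simp add: order_antisym)
qed

lemma ideal_gen_sub: "S \<subseteq> ideal_gen S"
  unfolding ideal_gen_def by auto

lemma ideal_gen_least: "is_ideal I \<Longrightarrow> S \<subseteq> I \<Longrightarrow> ideal_gen S \<subseteq> I"
  unfolding ideal_gen_def by auto

lemma Xa_imp:
  assumes L: "integral_implicative_lattice imp"
  shows "Xa (imp a b) = Gimp imp (Xa a) (Xa (b::'a::bounded_lattice))"
proof -
  have A1: "\<And>a b c. imp (sup a b) c = inf (imp a c) (imp b c)"
   and A2: "\<And>a b c. imp a (inf b c) = inf (imp a b) (imp a c)"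
    using L unfolding integral_implicative_lattice_def by auto
  have mono: "imp c d \<le> imp a b" if "a \<le> c" "d \<le> b" for c d
  proof -
    have "imp c d = imp (sup a c) d" using that by (simp add: sup_absorb2)
    also have "\<dots> \<le> imp a d" using A1 by simp
    also have "imp a d = imp a (inf d b)" using that by (simp add: inf_absorb1)
    also have "\<dots> \<le> imp a b" using A2 by simp
    finally show ?thesis .
  qed
  define S where "S = {y \<in> Ys. \<exists>x\<in>Xa a. \<exists>v\<in>upol (Xa b). Trel imp y x v}"
  have "S = {I \<in> Ys. imp a b \<in> I}"
  proof
    show "S \<subseteq> {I \<in> Ys. imp a b \<in> I}"
    proof
      fix y assume "y \<in> S"
      then obtain x v where y: "y \<in> Ys" "x \<in> Xa a" "v \<in> upol (Xa b)" "leadsto imp x v \<subseteq> y"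
        unfolding S_def Trel_def by blast
      have "a \<in> x" using y(2) unfolding Xa_def by auto
      have "b \<in> v" using y(3) unfolding upol_Xa by auto
      then have "imp a b \<in> {imp c d | c d. c \<in> x \<and> d \<in> v}" using \<open>a \<in> x\<close> by blast
      then have "imp a b \<in> leadsto imp x v" unfolding leadsto_def using ideal_gen_sub by (rule subsetD[rotated])
      with y show "y \<in> {I \<in> Ys. imp a b \<in> I}" by auto
    qed
  next
    show "{I \<in> Ys. imp a b \<in> I} \<subseteq> S"
    proof
      fix y assume y: "y \<in> {I \<in> Ys. imp a b \<in> I}"
      have x: "{c. a \<le> c} \<in> Xa a" using up_filter unfolding Xa_def Xs_def by auto
      have v: "{c. c \<le> b} \<in> upol (Xa b)" using down_ideal unfolding upol_Xa Ys_def by auto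
      have "leadsto imp {c. a \<le> c} {c. c \<le> b} \<subseteq> {c. c \<le> imp a b}"
        unfolding leadsto_def using mono by (intro ideal_gen_least[OF down_ideal]) auto
      also have "\<dots> \<subseteq> y" using y ideal_down unfolding Ys_def by blast
      finally show "y \<in> S" unfolding S_def Trel_def using x v y by blast
    qed
  qed
  then show ?thesis unfolding Gimp_def blacktri_def S_def[symmetric]
    using lpol_Ia upol_Xa by metis
qed

lemma gen_open:
  assumes "generate_topology_on (range Xa) W"
  shows "\<forall>x \<in> W \<inter> Xs. \<exists>c::'a::bounded_lattice. x \<in> Xa c \<and> Xa c \<subseteq> W"
  using assms
proof induct
  case Empty
  then show ?case by auto
next
  case (Int a b)
  show ?case
  proof
    fix x assume x: "x \<in> a \<inter> b \<inter> Xs"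
    with Int obtain c d where "x \<in> Xa c" "Xa c \<subseteq> a" "x \<in> Xa d" "Xa d \<subseteq> b" by blast
    then show "\<exists>e. x \<in> Xa e \<and> Xa e \<subseteq> a \<inter> b" using Xa_inf by (metis Int_iff Int_mono)
  qed
next
  case (UN K)
  then show ?case by blast
next
  case (Basis s)
  then show ?case by blast
qed

lemma open_Xa: "openin spectral_top (Xa a)"
  unfolding spectral_top_def openin_subtopology openin_topology_generated_by_iff
  by (rule exI[of _ "Xa a"]) (auto intro: generate_topology_on.Basis simp: Xa_def)

lemma topspace_st: "topspace spectral_top = Xs"
  unfolding spectral_top_def using filter_top by (auto simp: Xa_def Xs_def)

lemma open_upclosed:
  assumes "openin spectral_top U" "{c. (a::'a::bounded_lattice) \<le> c} \<in> U"
  shows "Xa a \<subseteq> U"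
proof -
  obtain T where T: "generate_topology_on (range Xa) T" "U = T \<inter> Xs"
    using assms(1) unfolding spectral_top_def openin_subtopology openin_topology_generated_by_iff
    by blast
  then obtain c where c: "{c. a \<le> c} \<in> Xa c" "Xa c \<subseteq> T"
    using gen_open[OF T(1)] assms(2) by blast
  then have "a \<le> c" unfolding Xa_def by auto
  show ?thesis
  proof
    fix x assume x: "x \<in> Xa a"
    then have "c \<in> x" using \<open>a \<le> c\<close> filter_up unfolding Xa_def Xs_def by blast
    then have "x \<in> Xa c" using x unfolding Xa_def by auto
    then show "x \<in> U" using c T x unfolding Xa_def by auto
  qed
qed

lemma compact_Xa: "compactin spectral_top (Xa (a::'a::bounded_lattice))"
  unfolding compactin_def
proof (intro conjI allI impI)
  show "Xa a \<subseteq> topspace spectral_top" unfolding topspace_st Xa_def by auto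
next
  fix \<U> assume U: "(\<forall>U\<in>\<U>. openin spectral_top U) \<and> Xa a \<subseteq> \<Union>\<U>"
  have "{c. a \<le> c} \<in> Xa a" using up_filter unfolding Xa_def Xs_def by auto
  with U obtain V where V: "V \<in> \<U>" "{c. a \<le> c} \<in> V" by blast
  then have "Xa a \<subseteq> V" using U open_upclosed by blast
  then show "\<exists>\<F>. finite \<F> \<and> \<F> \<subseteq> \<U> \<and> Xa a \<subseteq> \<Union>\<F>"
    using V by (intro exI[of _ "{V}"]) auto
qed

lemma KOG_Xa: "Xa a \<in> KOG"
  unfolding KOG_def using stable_Xa compact_Xa open_Xa by blast

lemma KOG_surj:
  assumes "A \<in> (KOG :: 'a::bounded_lattice set set set)"
  shows "A \<in> range Xa"
proof -
  have st: "stable A" and cp: "compactin spectral_top A" and op: "openin spectral_top A"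
    using assms unfolding KOG_def by auto
  obtain T where T: "generate_topology_on (range Xa) T" "A = T \<inter> Xs"
    using op unfolding spectral_top_def openin_subtopology openin_topology_generated_by_iff
    by blast
  have cov: "A = \<Union> (Xa ` {c. Xa c \<subseteq> A})"
  proof
    show "A \<subseteq> \<Union> (Xa ` {c. Xa c \<subseteq> A})"
    proof
      fix x assume "x \<in> A"
      then obtain c where "x \<in> Xa c" "Xa c \<subseteq> T" using gen_open[OF T(1)] T(2) by blast
      then have "Xa c \<subseteq> A" using T(2) unfolding Xa_def by auto
      with \<open>x \<in> Xa c\<close> show "x \<in> \<Union> (Xa ` {c. Xa c \<subseteq> A})" by blast
    qed
  qed auto
  obtain F where F: "finite F" "F \<subseteq> Xa ` {c. Xa c \<subseteq> A}" "A \<subseteq> \<Union>F"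
    using cp cov open_Xa unfolding compactin_def
    by (metis (no_types, lifting) equalityE imageE)
  obtain C where C: "C \<subseteq> {c. Xa c \<subseteq> A}" "finite C" "F = Xa ` C"
    using finite_subset_image[OF F(1) F(2)] by blast
  have AC: "A = \<Union> (Xa ` C)" using C F by blast
  obtain s where s: "\<forall>I\<in>(Ys::'a set set). (C \<subseteq> I \<longleftrightarrow> s \<in> I)" using fin_sup_ex[OF C(2)] by blast
  have "upol A = {I \<in> Ys. s \<in> I}"
    unfolding AC upol_UN upol_Xa using s by auto
  then have "A = Xa s" using st lpol_Ia unfolding stable_def by metis
  then show ?thesis by blast
qed

theorem proposition4p3:
  fixes imp :: "'a::bounded_lattice \<Rightarrow> 'a \<Rightarrow> 'a"
  assumes "integral_implicative_lattice imp"
  shows "bij_betw Xa (UNIV :: 'a set) (KOG :: 'a set set set)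
    \<and> (\<forall>a b :: 'a. Xa (inf a b) = Xa a \<inter> Xa b)
    \<and> (\<forall>a b :: 'a. Xa (sup a b) = Gjoin (Xa a) (Xa b))
    \<and> (\<forall>a b :: 'a. Xa (imp a b) = Gimp imp (Xa a) (Xa b))
    \<and> Xa (top :: 'a) = (Xs :: 'a set set)
    \<and> Xa (bot :: 'a) = lpol (Ys :: 'a set set)"
proof (intro conjI allI)
  show "bij_betw Xa (UNIV :: 'a set) (KOG :: 'a set set set)"
    unfolding bij_betw_def using Xa_inj KOG_Xa KOG_surj by blast
qed (auto simp: Xa_inf Xa_sup Xa_imp[OF assms] Xa_top Xa_bot)

end
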